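(* Let $n\geq1$ be an integer, $p>1$ real, $q=pe^{2\pi i/n}$, and $X_{n,p}=\{\sum_{k=0}^{n-1}x_kq^k\mid x_k\in\{0,1\}\}$. For $h=1,\dots,n$ define $$\underline K(h)=\{k\in\{0,\dots,n-1\}\mid (k-h+1)\bmod n\leq \lfloor n/2\rfloor-1\},\qquad \overline K(h)=\{k\in\{0,\dots,n-1\}\mid (k-h+1)\bmod n\leq \lceil n/2\rceil-1\},$$ with $(k-h+1)\bmod n\in\{0,\dots,n-1\}$, and set $\mathbf v_{2h-1}=\sum_{k\in\underline K(h)}q^k$, $\mathbf v_{2h}=\sum_{k\in\overline K(h)}q^k$. Indices of the $\mathbf v_j$ are taken modulo $2n$ (so $\mathbf v_0=\mathbf v_{2n}$), and for $j=1,\dots,2n$ let $\mathbf n_j=-i(\mathbf v_j-\mathbf v_{j-1})$. Then for every $x\in X_{n,p}$ and every $h=1,\dots,n$, $$(x-\mathbf v_{2h-1})\cdot\mathbf n_{2h-1}\leq0\qquad\text{and}\qquad (x-\mathbf v_{2h})\cdot\mathbf n_{2h}\leq 0 .$$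
   Context: For $\mathbf u,\mathbf w\in\mathbb C$, the scalar product is $\mathbf u\cdot\mathbf w=\mathrm{Re}(\mathbf u\,\overline{\mathbf w})=|\mathbf u||\mathbf w|\cos(\arg\mathbf u-\arg\mathbf w)$, i.e. the Euclidean inner product under $\mathbb C\cong\mathbb R^2$. *)

theory Defs
  imports "HOL-Analysis.Analysis"
begin

definition qpar :: "nat \<Rightarrow> real \<Rightarrow> complex" where
  "qpar n p = complex_of_real p * exp (2 * complex_of_real pi * \<i> / of_nat n)"

definition Xset :: "nat \<Rightarrow> real \<Rightarrow> complex set" where
  "Xset n p = {(\<Sum>k<n. of_nat (c k) * qpar n p ^ k) | c :: nat \<Rightarrow> nat. \<forall>k<n. c k \<in> {0, 1}}"

definition Klow :: "nat \<Rightarrow> int \<Rightarrow> nat set" where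
  "Klow n h = {k. k < n \<and> (int k - h + 1) mod int n \<le> \<lfloor>real n / 2\<rfloor> - 1}"

definition Khigh :: "nat \<Rightarrow> int \<Rightarrow> nat set" where
  "Khigh n h = {k. k < n \<and> (int k - h + 1) mod int n \<le> \<lceil>real n / 2\<rceil> - 1}"

definition vvec :: "nat \<Rightarrow> real \<Rightarrow> int \<Rightarrow> complex" where
  "vvec n p j = (let m = (if j mod (2 * int n) = 0 then 2 * int n else j mod (2 * int n)) in
     if odd m then (\<Sum>k\<in>Klow n ((m + 1) div 2). qpar n p ^ k)
     else (\<Sum>k\<in>Khigh n (m div 2). qpar n p ^ k))"

definition nvec :: "nat \<Rightarrow> real \<Rightarrow> int \<Rightarrow> complex" where
  "nvec n p j = - \<i> * (vvec n p j - vvec n p (j - 1))"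

end

theory Submission imports Defs begin

definition S :: "nat \<Rightarrow> int \<Rightarrow> real" where "S n a = sin (2*pi * of_int a / real n)"

lemma S_period: assumes "n > 0" shows "S n (a + int n * d) = S n a"
proof -
  have "2*pi * of_int (a + int n * d) / real n = 2*pi * of_int a / real n + 2*pi * of_int d"
    using assms by (simp add: field_simps)
  then show ?thesis unfolding S_def by (simp add: sin_add)
qed

lemma S_neg: "S n (-a) = - S n a" unfolding S_def by simp

lemma S_nonneg: assumes "n > 0" "0 \<le> a" "2*a \<le> int n" shows "S n a \<ge> 0"
  unfolding S_def
proof (rule sin_ge_zero)
  show "0 \<le> 2 * pi * real_of_int a / real n" using assms by simp
  have "real_of_int (2*a) \<le> real n" using assms by linarith
  hence "2 * real_of_int a \<le> real n" by simp
  hence "2 * pi * real_of_int a \<le> pi * real n" by (metis mult.assoc mult.commute mult_left_mono pi_ge_zero)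
  thus "2 * pi * real_of_int a / real n \<le> pi" using assms by (simp add: divide_le_eq mult.commute)
qed

lemma S_nonpos: assumes "n > 0" "int n \<le> 2*a" "a \<le> int n" shows "S n a \<le> 0"
proof (cases "a = int n")
  case True thus ?thesis using assms unfolding S_def by simp
next
  case False
  have a1: "real_of_int (int n) \<le> real_of_int (2*a)" using assms by linarith
  have a2: "real_of_int a < real n" using assms False by linarith
  show ?thesis unfolding S_def
  proof (rule sin_le_zero)
    from a1 have "real n \<le> 2 * real_of_int a" by simp
    hence "pi * real n \<le> 2 * pi * real_of_int a" by (metis mult.assoc mult.commute mult_left_mono pi_ge_zero)
    thus "pi \<le> 2 * pi * real_of_int a / real n" using assms by (simp add: le_divide_eq mult.commute)
    have "2 * pi * real_of_int a < 2*pi * real n" using a2 by simp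
    thus "2 * pi * real_of_int a / real n < 2 * pi" using assms by (simp add: divide_less_eq mult.commute)
  qed
qed

lemma qpow: "n > 0 \<Longrightarrow> qpar n p ^ k = complex_of_real (p^k) * cis (2*pi*real k / real n)"
proof -
  assume n: "n > 0"
  have "exp (2 * complex_of_real pi * \<i> / of_nat n) = cis (2*pi/real n)"
    unfolding cis_conv_exp by (simp add: field_simps)
  hence "qpar n p = complex_of_real p * cis (2*pi/real n)" unfolding qpar_def by simp
  hence "qpar n p ^ k = complex_of_real p ^ k * cis (2*pi/real n) ^ k"
    by (simp add: power_mult_distrib)
  also have "\<dots> = complex_of_real p ^ k * cis (real k * (2*pi/real n))"
    by (simp only: Complex.DeMoivre)
  also have "real k * (2*pi/real n) = 2*pi*real k/real n" by simp
  finally show ?thesis by (simp only: of_real_power)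
qed

lemma inner_cis: "(complex_of_real a * cis t) \<bullet> (- \<i> * (complex_of_real c * cis f)) = - (a * c * sin (t - f))"
  unfolding inner_complex_def by (simp add: sin_diff algebra_simps)

lemma main_ineq:
  fixes K :: "nat set" and c f :: real
  assumes n: "n > 0" and K: "K \<subseteq> {..<n}" and c: "c \<ge> 0" and p: "p > 0" and x: "x \<in> Xset n p"
    and sg: "\<And>k. k < n \<Longrightarrow> (k \<in> K \<longrightarrow> sin (2*pi*real k/real n - f) \<le> 0) \<and> (k \<notin> K \<longrightarrow> sin (2*pi*real k/real n - f) \<ge> 0)"
  shows "(x - (\<Sum>k\<in>K. qpar n p ^ k)) \<bullet> (- \<i> * (complex_of_real c * cis f)) \<le> 0"
proof -
  obtain cc where cc: "\<forall>k<n. cc k \<in> {0,1::nat}" and xe: "x = (\<Sum>k<n. of_nat (cc k) * qpar n p ^ k)"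
    using x unfolding Xset_def by blast
  define ind where "ind k = (if k \<in> K then 1 else 0::real)" for k
  have v: "(\<Sum>k\<in>K. qpar n p ^ k) = (\<Sum>k<n. complex_of_real (ind k) * qpar n p ^ k)"
  proof -
    have "(\<Sum>k<n. complex_of_real (ind k) * qpar n p ^ k) = (\<Sum>k\<in>{..<n} \<inter> K. qpar n p ^ k)"
      unfolding ind_def by (simp add: sum.inter_restrict if_distrib if_distribR cong: if_cong)
    also have "{..<n} \<inter> K = K" using K by blast
    finally show ?thesis by simp
  qed
  define N where "N = - \<i> * (complex_of_real c * cis f)"
  have "x - (\<Sum>k\<in>K. qpar n p ^ k) = (\<Sum>k<n. complex_of_real (p^k * (real (cc k) - ind k)) * cis (2*pi*real k/real n))"
    unfolding xe v by (simp add: sum_subtractf[symmetric] qpow[OF n] algebra_simps)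
  hence "(x - (\<Sum>k\<in>K. qpar n p ^ k)) \<bullet> N = (\<Sum>k<n. (complex_of_real (p^k * (real (cc k) - ind k)) * cis (2*pi*real k/real n)) \<bullet> N)"
    by (simp only: inner_sum_left)
  also have "\<dots> = (\<Sum>k<n. - (p^k * (real (cc k) - ind k) * c * sin (2*pi*real k/real n - f)))"
    unfolding N_def by (simp only: inner_cis)
  also have "\<dots> \<le> 0"
  proof (rule sum_nonpos)
    fix k assume "k \<in> {..<n}"
    hence k: "k < n" by simp
    have pk: "p^k \<ge> 0" using p by simp
    show "- (p^k * (real (cc k) - ind k) * c * sin (2*pi*real k/real n - f)) \<le> 0"
    proof (cases "k \<in> K")
      case True
      have "real (cc k) - ind k \<le> 0" using cc k True unfolding ind_def by auto
      moreover have "sin (2*pi*real k/real n - f) \<le> 0" using sg[OF k] True by blast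
      ultimately have "(real (cc k) - ind k) * sin (2*pi*real k/real n - f) \<ge> 0" by (simp add: mult_nonpos_nonpos)
      hence "p^k * c * ((real (cc k) - ind k) * sin (2*pi*real k/real n - f)) \<ge> 0" using pk c by simp
      thus ?thesis by (simp add: algebra_simps)
    next
      case False
      have "real (cc k) - ind k \<ge> 0" using cc k False unfolding ind_def by auto
      moreover have "sin (2*pi*real k/real n - f) \<ge> 0" using sg[OF k] False by blast
      ultimately have "(real (cc k) - ind k) * sin (2*pi*real k/real n - f) \<ge> 0" by simp
      hence "p^k * c * ((real (cc k) - ind k) * sin (2*pi*real k/real n - f)) \<ge> 0" using pk c by simp
      thus ?thesis by (simp add: algebra_simps)
    qed
  qed
  finally show ?thesis unfolding N_def .
qed

lemma floor_half: "\<lfloor>real n / 2\<rfloor> = int (n div 2)"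
proof (cases "even n")
  case True then obtain m where "n = 2*m" by blast
  thus ?thesis by simp
next
  case False then obtain m where m: "n = 2*m+1" using oddE by blast
  have "real n / 2 = real m + 1/2" using m by simp
  hence "\<lfloor>real n / 2\<rfloor> = int m" by linarith
  thus ?thesis using m by simp
qed

lemma ceil_half: "\<lceil>real n / 2\<rceil> = int ((n+1) div 2)"
proof (cases "even n")
  case True then obtain m where "n = 2*m" by blast
  thus ?thesis by simp
next
  case False then obtain m where m: "n = 2*m+1" using oddE by blast
  have "real n / 2 = real m + 1/2" using m by simp
  hence "\<lceil>real n / 2\<rceil> = int m + 1" by linarith
  thus ?thesis using m by simp
qed

lemma V1: assumes "1 \<le> h" "h \<le> int n" shows "vvec n p (2*h-1) = (\<Sum>k\<in>Klow n h. qpar n p ^ k)"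
proof -
  have "(2*h-1) mod (2*int n) = 2*h-1" using assms by (intro mod_pos_pos_trivial) auto
  moreover have "(2*h-1+1) div 2 = h" by simp
  ultimately show ?thesis unfolding vvec_def Let_def using assms by simp
qed

lemma V2: assumes "1 \<le> h" "h \<le> int n" shows "vvec n p (2*h) = (\<Sum>k\<in>Khigh n h. qpar n p ^ k)"
proof (cases "h = int n")
  case True
  hence "(2*h) mod (2*int n) = 0" by simp
  thus ?thesis unfolding vvec_def Let_def using True by simp
next
  case False
  hence "(2*h) mod (2*int n) = 2*h" using assms by (intro mod_pos_pos_trivial) auto
  thus ?thesis unfolding vvec_def Let_def using assms by simp
qed

lemma Khigh_n: "Khigh n (int n) = Khigh n 0"
proof -
  have "\<And>k. (int k - int n + 1) mod int n = (int k - 0 + 1) mod int n"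
  proof -
    fix k
    have "int k - int n + 1 = (int k - 0 + 1) + (-1) * int n" by simp
    thus "(int k - int n + 1) mod int n = (int k - 0 + 1) mod int n" by (simp only: mod_mult_self1)
  qed
  thus ?thesis unfolding Khigh_def by simp
qed

lemma V3: assumes "1 \<le> h" "h \<le> int n" shows "vvec n p (2*h-1-1) = (\<Sum>k\<in>Khigh n (h-1). qpar n p ^ k)"
proof (cases "h = 1")
  case True
  thus ?thesis unfolding vvec_def Let_def using Khigh_n[of n] by simp
next
  case False
  hence "(2*h-1-1) mod (2*int n) = 2*h-1-1" using assms by (intro mod_pos_pos_trivial) auto
  moreover have "(2*h-1-1) div 2 = h - 1" by simp
  ultimately show ?thesis unfolding vvec_def Let_def using assms False by simp
qed

lemma S_cong: assumes "n > 0" "a mod int n = b mod int n" shows "S n a = S n b"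
proof -
  have "S n a = S n (a mod int n + int n * (a div int n))" by simp
  also have "\<dots> = S n (a mod int n)" using S_period[OF assms(1)] by blast
  also have "\<dots> = S n (b mod int n + int n * (b div int n))" using S_period[OF assms(1), of "b mod int n" "b div int n"] assms(2) by simp
  also have "\<dots> = S n b" by simp
  finally show ?thesis .
qed

lemma sin_S1: "sin (2*pi*real k/real n - 2*pi*real k'/real n) = S n (int k - int k')"
  unfolding S_def by (simp add: diff_divide_distrib algebra_simps)

lemma sin_S2: "sin (2*pi*real k/real n - (2*pi*real k'/real n + pi)) = - S n (int k - int k')"
proof -
  have "2*pi*real k/real n - (2*pi*real k'/real n + pi) = (2*pi*real k/real n - 2*pi*real k'/real n) - pi" by simp
  hence "sin (2*pi*real k/real n - (2*pi*real k'/real n + pi)) = - sin (2*pi*real k/real n - 2*pi*real k'/real n)"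
    by (simp only: sin_minus_pi)
  thus ?thesis using sin_S1[of k n k'] by simp
qed

lemma uniq: assumes "k < n" "k' < n" "(int k - a) mod int n = (int k' - a) mod int n" shows "k = k'"
proof -
  have "(int k - a + a) mod int n = (int k' - a + a) mod int n" using assms(3) by (metis mod_add_left_eq)
  hence "int k mod int n = int k' mod int n" by simp
  thus ?thesis using assms by simp
qed

lemma cis_shift: "cis (y + 2*pi * of_int d) = cis y"
proof -
  have "sin (y + 2*pi * of_int d) = sin y \<and> cos (y + 2*pi * of_int d) = cos y"
    using sin_cos_eq_iff by blast
  thus ?thesis by (simp add: complex_eq_iff)
qed

lemma cis_pi': "cis (y + pi) = - cis y"
  by (simp add: complex_eq_iff)

theorem lemma3p13:
  fixes n :: nat and p :: real and x :: complex and h :: int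
  assumes "n \<ge> 1" and "p > 1"
    and "x \<in> Xset n p"
    and "1 \<le> h" and "h \<le> int n"
  shows "(x - vvec n p (2 * h - 1)) \<bullet> nvec n p (2 * h - 1) \<le> 0
       \<and> (x - vvec n p (2 * h)) \<bullet> nvec n p (2 * h) \<le> 0"
proof -
  have n0: "n > 0" using assms by simp
  have p0: "p > 0" using assms by simp
  define m where "m = n div 2"
  define r where "r k = (int k - (h - 1)) mod int n" for k :: nat
  have r_rng: "0 \<le> r k" "r k < int n" for k unfolding r_def using n0 by auto
  have fl: "\<lfloor>real n / 2\<rfloor> = int m" unfolding m_def by (rule floor_half)
  have e1: "int k - h + 1 = int k - (h - 1)" for k by simp
  have e2: "int k - (h - 1) + 1 = int k - (h - 1 - 1)" for k by simp
  have memL: "k \<in> Klow n h \<longleftrightarrow> k < n \<and> r k \<le> int m - 1" for k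
    unfolding Klow_def r_def fl e1 by simp
  have memH: "k \<in> Khigh n h \<longleftrightarrow> k < n \<and> r k \<le> int ((n+1) div 2) - 1" for k
    unfolding Khigh_def r_def ceil_half e1 by simp
  have memH1: "k \<in> Khigh n (h-1) \<longleftrightarrow> k < n \<and> (r k + 1) mod int n \<le> int ((n+1) div 2) - 1" for k
  proof -
    have eq: "(int k - (h - 1) + 1) mod int n = (r k + 1) mod int n" unfolding r_def by (simp add: mod_simps)
    show ?thesis unfolding Khigh_def ceil_half mem_Collect_eq eq ..
  qed
  have finL: "finite (Klow n h)" unfolding Klow_def by simp
  have finH: "finite (Khigh n h)" unfolding Khigh_def by simp
  have finH1: "finite (Khigh n (h-1))" unfolding Khigh_def by simp
  have qp: "qpar n p ^ k = complex_of_real (p^k) * cis (2*pi*real k/real n)" for k using qpow[OF n0] .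
  have part2: "(x - vvec n p (2 * h)) \<bullet> nvec n p (2 * h) \<le> 0"
  proof (cases "even n")
    case True
    hence "(n+1) div 2 = m" unfolding m_def by presburger
    hence "Klow n h = Khigh n h" using memL memH by blast
    hence "nvec n p (2*h) = 0" unfolding nvec_def using V1[OF assms(4,5)] V2[OF assms(4,5)] by simp
    thus ?thesis by simp
  next
    case False
    hence nm: "n = 2*m+1" and cm: "(n+1) div 2 = m+1" unfolding m_def by presburger+
    define k0 where "k0 = nat ((h - 1 + int m) mod int n)"
    have ik0: "int k0 = (h - 1 + int m) mod int n" unfolding k0_def using n0 by simp
    have "int k0 < int n" using ik0 n0 by simp
    hence k0n: "k0 < n" by simp
    have rk0: "r k0 = int m" unfolding r_def ik0 using nm by (simp add: mod_simps)
    have KH: "Khigh n h = insert k0 (Klow n h)"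
    proof (rule set_eqI)
      fix k
      show "k \<in> Khigh n h \<longleftrightarrow> k \<in> insert k0 (Klow n h)"
      proof (cases "r k = int m")
        case True
        hence u: "k < n \<Longrightarrow> k = k0" using uniq[of k n k0 "h-1"] k0n rk0 unfolding r_def by simp
        have a: "k \<in> Khigh n h \<longleftrightarrow> k < n" using memH[of k] cm True by simp
        have b: "k \<notin> Klow n h" using memL[of k] True by simp
        show ?thesis using a b u k0n by blast
      next
        case False
        have ne: "k \<noteq> k0" using False rk0 by blast
        have c: "int (m+1) - 1 = int m" by simp
        have "r k \<le> int m \<longleftrightarrow> r k \<le> int m - 1" using False by linarith
        hence "k \<in> Khigh n h \<longleftrightarrow> k \<in> Klow n h" using memH[of k] memL[of k] unfolding cm c by blast
        thus ?thesis using ne by blast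
      qed
    qed
    have k0L: "k0 \<notin> Klow n h" using memL rk0 by simp
    have "nvec n p (2*h) = - \<i> * (complex_of_real (p^k0) * cis (2*pi*real k0/real n))"
      unfolding nvec_def V1[OF assms(4,5)] V2[OF assms(4,5)] KH using finL k0L qp by simp
    moreover have "(x - (\<Sum>k\<in>Khigh n h. qpar n p ^ k)) \<bullet> (- \<i> * (complex_of_real (p^k0) * cis (2*pi*real k0/real n))) \<le> 0"
    proof (rule main_ineq[OF n0 _ _ p0 assms(3)])
      show "Khigh n h \<subseteq> {..<n}" unfolding Khigh_def by auto
      show "0 \<le> p ^ k0" using p0 by simp
      fix k assume k: "k < n"
      have "sin (2 * pi * real k / real n - 2 * pi * real k0 / real n) = S n (r k - int m)"
        unfolding sin_S1
      proof (rule S_cong[OF n0])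
        show "(int k - int k0) mod int n = (r k - int m) mod int n"
          unfolding ik0 r_def by (simp add: mod_simps algebra_simps)
      qed
      moreover have "r k \<le> int m \<Longrightarrow> S n (r k - int m) \<le> 0"
        using S_nonneg[OF n0, of "int m - r k"] S_neg[of n "int m - r k"] r_rng[of k] nm by simp
      moreover have "\<not> r k \<le> int m \<Longrightarrow> S n (r k - int m) \<ge> 0"
        using S_nonneg[OF n0, of "r k - int m"] r_rng[of k] nm by simp
      ultimately show "(k \<in> Khigh n h \<longrightarrow> sin (2 * pi * real k / real n - 2 * pi * real k0 / real n) \<le> 0) \<and>
        (k \<notin> Khigh n h \<longrightarrow> 0 \<le> sin (2 * pi * real k / real n - 2 * pi * real k0 / real n))"
        using memH cm k by auto
    qed
    ultimately show ?thesis unfolding V2[OF assms(4,5)] by simp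
  qed
  have N1: "nvec n p (2*h-1) = - \<i> * ((\<Sum>k\<in>Klow n h. qpar n p ^ k) - (\<Sum>k\<in>Khigh n (h-1). qpar n p ^ k))"
    unfolding nvec_def V1[OF assms(4,5)] V3[OF assms(4,5)] ..
  define kb where "kb = nat ((h - 2) mod int n)"
  have ikb: "int kb = (h - 2) mod int n" unfolding kb_def using n0 by simp
  have "int kb < int n" using ikb n0 by simp
    hence kbn: "kb < n" by simp
  have rkb: "r kb = int n - 1"
  proof -
    have "r kb = (-1) mod int n" unfolding r_def ikb by (simp add: mod_simps)
    also have "\<dots> = int n - 1" using n0 by (simp add: zmod_minus1)
    finally show ?thesis .
  qed
  have part1: "(x - vvec n p (2 * h - 1)) \<bullet> nvec n p (2 * h - 1) \<le> 0"
  proof (cases "even n")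
    case False
    hence nm: "n = 2*m+1" and cm: "(n+1) div 2 = m+1" unfolding m_def by presburger+
    have KH: "Khigh n (h-1) = insert kb (Klow n h)"
    proof (rule set_eqI)
      fix k
      show "k \<in> Khigh n (h-1) \<longleftrightarrow> k \<in> insert kb (Klow n h)"
      proof (cases "r k = int n - 1")
        case True
        hence u: "k < n \<Longrightarrow> k = kb" using uniq[of k n kb "h-1"] kbn rkb unfolding r_def by simp
        have z: "(r k + 1) mod int n = 0" using True n0 by simp
        have a: "k \<in> Khigh n (h-1) \<longleftrightarrow> k < n" using memH1[of k] cm z by simp
        have b: "k \<notin> Klow n h" using memL[of k] True nm by simp
        show ?thesis using a b u kbn by blast
      next
        case False
        hence mm: "(r k + 1) mod int n = r k + 1" using r_rng[of k] by (intro mod_pos_pos_trivial) auto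
        have ne: "k \<noteq> kb" using False rkb by blast
        have c: "int (m+1) - 1 = int m" by simp
        have "r k + 1 \<le> int m \<longleftrightarrow> r k \<le> int m - 1" by linarith
        hence "k \<in> Khigh n (h-1) \<longleftrightarrow> k \<in> Klow n h" using memH1[of k] memL[of k] unfolding cm c mm by blast
        thus ?thesis using ne by blast
      qed
    qed
    have kbL: "kb \<notin> Klow n h" using memL rkb nm by simp
    have "nvec n p (2*h-1) = - \<i> * (complex_of_real (p^kb) * cis (2*pi*real kb/real n + pi))"
      unfolding N1 KH cis_pi' using finL kbL qp by simp
    moreover have "(x - (\<Sum>k\<in>Klow n h. qpar n p ^ k)) \<bullet> (- \<i> * (complex_of_real (p^kb) * cis (2*pi*real kb/real n + pi))) \<le> 0"
    proof (rule main_ineq[OF n0 _ _ p0 assms(3)])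
      show "Klow n h \<subseteq> {..<n}" unfolding Klow_def by auto
      show "0 \<le> p ^ kb" using p0 by simp
      fix k assume k: "k < n"
      have "sin (2 * pi * real k / real n - (2 * pi * real kb / real n + pi)) = - S n (r k + 1)"
        unfolding sin_S2
      proof -
        have "S n (int k - int kb) = S n (r k + 1)"
        proof (rule S_cong[OF n0])
          show "(int k - int kb) mod int n = (r k + 1) mod int n"
            unfolding ikb r_def by (simp add: mod_simps algebra_simps)
        qed
        thus "- S n (int k - int kb) = - S n (r k + 1)" by simp
      qed
      moreover have "r k \<le> int m - 1 \<Longrightarrow> - S n (r k + 1) \<le> 0"
        using S_nonneg[OF n0, of "r k + 1"] r_rng[of k] nm by simp
      moreover have "\<not> r k \<le> int m - 1 \<Longrightarrow> - S n (r k + 1) \<ge> 0"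
        using S_nonpos[OF n0, of "r k + 1"] r_rng[of k] nm by simp
      ultimately show "(k \<in> Klow n h \<longrightarrow> sin (2 * pi * real k / real n - (2 * pi * real kb / real n + pi)) \<le> 0) \<and>
        (k \<notin> Klow n h \<longrightarrow> 0 \<le> sin (2 * pi * real k / real n - (2 * pi * real kb / real n + pi)))"
        using memL k by auto
    qed
    ultimately show ?thesis unfolding V1[OF assms(4,5)] by simp
  next
    case True
    hence nm: "n = 2*m" and cm: "(n+1) div 2 = m" unfolding m_def by presburger+
    have m1: "m \<ge> 1" using nm n0 by simp
    define ka where "ka = nat ((h + int m - 2) mod int n)"
    have ika: "int ka = (h + int m - 2) mod int n" unfolding ka_def using n0 by simp
    have "int ka < int n" using ika n0 by simp
    hence kan: "ka < n" by simp
    have rka: "r ka = int m - 1" unfolding r_def ika using nm m1 by (simp add: mod_simps)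
    have KL: "Klow n h = insert ka (Khigh n (h-1) - {kb})"
    proof (rule set_eqI)
      fix k
      show "k \<in> Klow n h \<longleftrightarrow> k \<in> insert ka (Khigh n (h-1) - {kb})"
      proof (cases "r k = int n - 1")
        case True
        hence u: "k < n \<Longrightarrow> k = kb" using uniq[of k n kb "h-1"] kbn rkb unfolding r_def by simp
        have b: "k \<notin> Klow n h" using memL[of k] True nm by simp
        have ne: "k \<noteq> ka" using True rka nm m1 by auto
        show ?thesis using b u ne memH1[of k] by blast
      next
        case False
        hence mm: "(r k + 1) mod int n = r k + 1" using r_rng[of k] by (intro mod_pos_pos_trivial) auto
        show ?thesis
        proof (cases "r k = int m - 1")
          case True
          hence "k < n \<Longrightarrow> k = ka" using uniq[of k n ka "h-1"] kan rka unfolding r_def by simp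
          thus ?thesis using memL[of k] memH1[of k] True kan rka by auto
        next
          case F2: False
          have "k \<noteq> ka" using F2 rka by blast
          moreover have "k \<noteq> kb" using False rkb by blast
          moreover have "r k + 1 \<le> int m - 1 \<longleftrightarrow> r k \<le> int m - 1" using F2 by linarith
          hence "k \<in> Khigh n (h-1) \<longleftrightarrow> k \<in> Klow n h" using memH1[of k] memL[of k] unfolding cm mm by blast
          ultimately show ?thesis by blast
        qed
      qed
    qed
    have kaH: "ka \<notin> Khigh n (h-1)"
    proof -
      have "(r ka + 1) mod int n = int m" using rka nm m1 by simp
      thus ?thesis using memH1 cm by simp
    qed
    have kbH: "kb \<in> Khigh n (h-1)" using memH1 rkb kbn cm m1 by simp
    have sumL: "(\<Sum>k\<in>Klow n h. qpar n p ^ k) = qpar n p ^ ka + ((\<Sum>k\<in>Khigh n (h-1). qpar n p ^ k) - qpar n p ^ kb)"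
      unfolding KL using finH1 kaH kbH by (simp add: sum_diff1)
    have cb: "cis (2*pi*real kb/real n) = - cis (2*pi*real ka/real n)"
    proof -
      define d where "d = (int kb - int ka) div int n"
      have "(int kb - int ka) mod int n = ((h-2) - (h + int m - 2)) mod int n"
        unfolding ikb ika by (simp add: mod_diff_eq)
      also have "\<dots> = (int m + (-1) * int n) mod int n" using nm by simp
      also have "\<dots> = int m mod int n" by (simp only: mod_mult_self1)
      also have "\<dots> = int m" using nm m1 by simp
      finally have "(int kb - int ka) mod int n = int m" .
      hence "int kb - int ka = int m + int n * d" unfolding d_def by (metis mod_div_mult_eq mult.commute)
      hence "real_of_int (int kb - int ka) = real_of_int (int m + int n * d)" by (rule arg_cong)
      hence "real kb = real ka + real m + real n * real_of_int d" by simp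
      hence "2*pi*real kb/real n = (2*pi*real ka/real n + pi) + 2*pi * of_int d"
        using nm n0 by (simp add: field_simps)
      thus ?thesis by (simp only: cis_shift cis_pi')
    qed
    have "nvec n p (2*h-1) = - \<i> * (complex_of_real (p^ka + p^kb) * cis (2*pi*real ka/real n))"
      unfolding N1 sumL qp cb by (simp add: algebra_simps)
    moreover have "(x - (\<Sum>k\<in>Klow n h. qpar n p ^ k)) \<bullet> (- \<i> * (complex_of_real (p^ka + p^kb) * cis (2*pi*real ka/real n))) \<le> 0"
    proof (rule main_ineq[OF n0 _ _ p0 assms(3)])
      show "Klow n h \<subseteq> {..<n}" unfolding Klow_def by auto
      show "0 \<le> p ^ ka + p ^ kb" using p0 by simp
      fix k assume k: "k < n"
      have "sin (2 * pi * real k / real n - 2 * pi * real ka / real n) = S n (r k - (int m - 1))"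
        unfolding sin_S1
      proof (rule S_cong[OF n0])
        show "(int k - int ka) mod int n = (r k - (int m - 1)) mod int n"
        proof -
          have A: "(int k - int ka) mod int n = (int k - (h + int m - 2)) mod int n"
            unfolding ika by (rule mod_diff_right_eq)
          have B: "(r k - (int m - 1)) mod int n = (int k - (h - 1) - (int m - 1)) mod int n"
            unfolding r_def by (rule mod_diff_left_eq)
          have C: "int k - (h + int m - 2) = int k - (h - 1) - (int m - 1)" by simp
          show ?thesis using A B C by simp
        qed
      qed
      moreover have "r k \<le> int m - 1 \<Longrightarrow> S n (r k - (int m - 1)) \<le> 0"
        using S_nonneg[OF n0, of "int m - 1 - r k"] S_neg[of n "int m - 1 - r k"] r_rng[of k] nm by simp
      moreover have "\<not> r k \<le> int m - 1 \<Longrightarrow> S n (r k - (int m - 1)) \<ge> 0"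
        using S_nonneg[OF n0, of "r k - (int m - 1)"] r_rng[of k] nm by simp
      ultimately show "(k \<in> Klow n h \<longrightarrow> sin (2 * pi * real k / real n - 2 * pi * real ka / real n) \<le> 0) \<and>
        (k \<notin> Klow n h \<longrightarrow> 0 \<le> sin (2 * pi * real k / real n - 2 * pi * real ka / real n))"
        using memL k by auto
    qed
    ultimately show ?thesis unfolding V1[OF assms(4,5)] by simp
  qed
  show ?thesis using part1 part2 by blast
qed

end
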